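(* Let $(a_i),(b_i)$ be finitely supported integer sequences, neither identically zero, and $q_i=a_i-b_i$. The following are equivalent. (1) With $q_\mu$ the lowest-index nonzero $q_i$ and $q_\nu$ the highest-index nonzero $q_i$: (a) $a_l=0$ for $l<\mu$ and $l\ge\nu$; (b) $a_\mu=q_\mu>0$; (c) $\sum_iq_i=0$; (d) $\max(q_l,0)\le a_l\le\sum_{i\le l}q_i$ for all integers $l$. (2) With $a_\mu$ the lowest-index nonzero $a_i$ and $b_\nu$ the highest-index nonzero $b_i$: (a) all $a_i,b_i\ge0$; (b) $a_l=0$ for $l\ge\nu$ and $b_l=0$ for $l\le\mu$; (c) $\sum_ia_i=\sum_ib_i$; (d) $\sum_{i\le l}b_i\le\sum_{i<l}a_i$ for all integers $l$. (3) With $m=\sum a_i$, $n=\sum b_i$: (a) all $a_i,b_i\ge0$; (b) $m=n$; (c) for all $1\le\alpha\le m$, $1\le\beta\le n$ with $\beta\ge\alpha$, $S(a)_\alpha<S(b)_\beta$.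
   Context: For a finitely supported sequence $(c_i)$ of non-negative integers, $S(c)$ is the nondecreasing sequence of length $\sum_ic_i$, indexed from $1$, in which each integer $i$ appears exactly $c_i$ times. *)

theory Defs
  imports Main
begin

definition supp :: "(int \<Rightarrow> int) \<Rightarrow> int set" where
  "supp c = {i. c i \<noteq> 0}"

definition tsum :: "(int \<Rightarrow> int) \<Rightarrow> int" where
  "tsum c = sum c (supp c)"

definition psum_le :: "(int \<Rightarrow> int) \<Rightarrow> int \<Rightarrow> int" where
  "psum_le c l = sum c {i \<in> supp c. i \<le> l}"

definition psum_lt :: "(int \<Rightarrow> int) \<Rightarrow> int \<Rightarrow> int" where
  "psum_lt c l = sum c {i \<in> supp c. i < l}"

text \<open>S(c): the nondecreasing list in which each i appears c_i times
  (for nonnegative c; its length is then the total sum). Indexed from 0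
  as an Isabelle list, so the paper's S(c)_alpha is Sseq c ! (alpha - 1).\<close>
definition Sseq :: "(int \<Rightarrow> int) \<Rightarrow> int list" where
  "Sseq c = concat (map (\<lambda>i. replicate (nat (c i)) i) (sorted_list_of_set (supp c)))"

end

theory Submission
  imports Defs
begin

lemma cnt_nth:
  fixes xs :: "int list"
  shows "sorted xs \<Longrightarrow> i < length xs \<Longrightarrow> (xs!i \<le> l) = (i < length (filter (\<lambda>x. x \<le> l) xs))"
proof (induction xs arbitrary: i)
  case Nil then show ?case by simp
next
  case (Cons x ys)
  have ys: "\<forall>y\<in>set ys. x \<le> y" "sorted ys" using Cons.prems(1) by auto
  show ?case
  proof (cases "x \<le> l")
    case True
    then show ?thesis using Cons ys by (cases i) auto
  next
    case False
    then have "filter (\<lambda>x. x \<le> l) ys = []" using ys by (auto simp: filter_empty_conv)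
    moreover have "(x#ys)!i \<ge> x" using Cons.prems ys by (cases i) auto
    ultimately show ?thesis using False by auto
  qed
qed

lemma sorted_cmp:
  fixes xs ys :: "int list"
  assumes sx: "sorted xs" and sy: "sorted ys" and lx: "length xs = M" and ly: "length ys = M"
  shows "(\<forall>i<M. xs!i < ys!i) \<longleftrightarrow>
     (\<forall>l. length (filter (\<lambda>x. x\<le>l) ys) \<le> length (filter (\<lambda>x. x \<le> l-1) xs))"
proof
  assume H: "\<forall>i<M. xs!i < ys!i"
  show "\<forall>l. length (filter (\<lambda>x. x\<le>l) ys) \<le> length (filter (\<lambda>x. x \<le> l-1) xs)"
  proof
    fix l
    define k where "k = length (filter (\<lambda>x. x\<le>l) ys)"
    show "k \<le> length (filter (\<lambda>x. x \<le> l-1) xs)"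
    proof (cases k)
      case 0 then show ?thesis by simp
    next
      case (Suc j)
      have "k \<le> M" unfolding k_def using ly by (metis length_filter_le)
      then have jM: "j < M" using Suc by simp
      have "ys!j \<le> l" using cnt_nth[OF sy, of j l] jM ly Suc k_def by simp
      then have "xs!j \<le> l - 1" using H jM by force
      then have "j < length (filter (\<lambda>x. x \<le> l-1) xs)" using cnt_nth[OF sx, of j "l-1"] jM lx by simp
      then show ?thesis using Suc by simp
    qed
  qed
next
  assume H: "\<forall>l. length (filter (\<lambda>x. x\<le>l) ys) \<le> length (filter (\<lambda>x. x \<le> l-1) xs)"
  show "\<forall>i<M. xs!i < ys!i"
  proof (intro allI impI)
    fix i assume iM: "i < M"
    have "i < length (filter (\<lambda>x. x\<le>ys!i) ys)" using cnt_nth[OF sy, of i "ys!i"] iM ly by simp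
    then have "i < length (filter (\<lambda>x. x \<le> ys!i-1) xs)" using H[rule_format, of "ys!i"] by linarith
    then have "xs!i \<le> ys!i - 1" using cnt_nth[OF sx, of i "ys!i-1"] iM lx by simp
    then show "xs!i < ys!i" by simp
  qed
qed

lemma sorted_concat_rep:
  fixes xs :: "int list"
  shows "sorted xs \<Longrightarrow> sorted (concat (map (\<lambda>i. replicate (n i) i) xs))"
  by (induction xs) (auto simp: sorted_append)

lemma len_filter_concat_rep:
  "length (filter P (concat (map (\<lambda>i. replicate (n i) i) xs))) = (\<Sum>i\<leftarrow>xs. if P i then n i else 0)"
  by (induction xs) auto

lemma Sseq_sorted: "finite (supp c) \<Longrightarrow> sorted (Sseq c)"
  unfolding Sseq_def by (rule sorted_concat_rep) simp

lemma Sseq_cnt: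
  assumes f: "finite (supp c)" and nn: "\<forall>i. c i \<ge> 0"
  shows "int (length (filter P (Sseq c))) = sum c {i\<in>supp c. P i}"
proof -
  have "length (filter P (Sseq c)) = (\<Sum>i\<in>supp c. if P i then nat (c i) else 0)"
    unfolding Sseq_def len_filter_concat_rep
    using f by (simp add: sum_list_distinct_conv_sum_set)
  then have "int (length (filter P (Sseq c))) = (\<Sum>i\<in>supp c. if P i then c i else 0)"
    using nn by (simp add: of_nat_sum if_distrib) (intro sum.cong, auto)
  also have "\<dots> = sum c {i\<in>supp c. P i}" using f by (simp add: sum.inter_filter)
  finally show ?thesis .
qed

lemma Sseq_len:
  assumes f: "finite (supp c)" and nn: "\<forall>i. c i \<ge> 0"
  shows "int (length (Sseq c)) = tsum c"
  using Sseq_cnt[OF f nn, of "\<lambda>_. True"] by (simp add: tsum_def)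

lemma sum_supp_sub: "finite U \<Longrightarrow> supp c \<subseteq> U \<Longrightarrow> sum c {i\<in>supp c. P i} = sum c {i\<in>U. P i}"
  by (rule sum.mono_neutral_left) (auto simp: supp_def)

theorem mainTheorem14:
  fixes a b :: "int \<Rightarrow> int"
  assumes fa: "finite (supp a)" and fb: "finite (supp b)"
    and na: "a \<noteq> (\<lambda>_. 0)" and nb: "b \<noteq> (\<lambda>_. 0)"
  defines "q \<equiv> (\<lambda>i. a i - b i)"
  shows
   "((supp q \<noteq> {} \<and>
      (let \<mu> = Min (supp q); \<nu> = Max (supp q) in
        (\<forall>l. l < \<mu> \<or> l \<ge> \<nu> \<longrightarrow> a l = 0) \<and>
        a \<mu> = q \<mu> \<and> q \<mu> > 0 \<and>
        tsum q = 0 \<and>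
        (\<forall>l. max (q l) 0 \<le> a l \<and> a l \<le> psum_le q l)))
    \<longleftrightarrow>
     ((\<forall>i. a i \<ge> 0 \<and> b i \<ge> 0) \<and>
      (let \<mu> = Min (supp a); \<nu> = Max (supp b) in
        (\<forall>l. l \<ge> \<nu> \<longrightarrow> a l = 0) \<and> (\<forall>l. l \<le> \<mu> \<longrightarrow> b l = 0) \<and>
        tsum a = tsum b \<and>
        (\<forall>l. psum_le b l \<le> psum_lt a l))))
  \<and>
   (((\<forall>i. a i \<ge> 0 \<and> b i \<ge> 0) \<and>
      (let \<mu> = Min (supp a); \<nu> = Max (supp b) in
        (\<forall>l. l \<ge> \<nu> \<longrightarrow> a l = 0) \<and> (\<forall>l. l \<le> \<mu> \<longrightarrow> b l = 0) \<and>
        tsum a = tsum b \<and>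
        (\<forall>l. psum_le b l \<le> psum_lt a l)))
    \<longleftrightarrow>
     ((\<forall>i. a i \<ge> 0 \<and> b i \<ge> 0) \<and>
      tsum a = tsum b \<and>
      (\<forall>\<alpha> \<beta>. 1 \<le> \<alpha> \<and> \<alpha> \<le> tsum a \<and> 1 \<le> \<beta> \<and> \<beta> \<le> tsum b \<and> \<beta> \<ge> \<alpha> \<longrightarrow>
         Sseq a ! nat (\<alpha> - 1) < Sseq b ! nat (\<beta> - 1))))"
  (is "(?C1 \<longleftrightarrow> ?C2) \<and> (?C2 \<longleftrightarrow> ?C3)")
proof -
  define U where "U = supp a \<union> supp b"
  have fU: "finite U" using fa fb U_def by simp
  have sa: "supp a \<subseteq> U" and sb: "supp b \<subseteq> U" and sq: "supp q \<subseteq> U"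
    unfolding U_def q_def supp_def by auto
  have fq: "finite (supp q)" using sq fU finite_subset by blast
  have ts: "tsum c = sum c U" if "supp c \<subseteq> U" for c
    using sum_supp_sub[OF fU that, of "\<lambda>_. True"] by (simp add: tsum_def)
  have pl: "psum_le c l = sum c {i\<in>V. i\<le>l}" if "finite V" "supp c \<subseteq> V" for c l V
    using sum_supp_sub[OF that] by (simp add: psum_le_def)
  have pt: "psum_lt c l = sum c {i\<in>V. i<l}" if "finite V" "supp c \<subseteq> V" for c l V
    using sum_supp_sub[OF that] by (simp add: psum_lt_def)
  have tsq: "tsum q = tsum a - tsum b"
    using ts[OF sa] ts[OF sb] ts[OF sq] by (simp add: q_def sum_subtractf)
  have psq: "psum_le q l = psum_le a l - psum_le b l" for l
    using pl[OF fU sa] pl[OF fU sb] pl[OF fU sq] by (simp add: q_def sum_subtractf)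
  have psa: "psum_le a l = psum_lt a l + a l" for l
  proof -
    have f: "finite (insert l U)" using fU by simp
    have s: "supp a \<subseteq> insert l U" using sa by auto
    have e: "{i\<in>insert l U. i\<le>l} = insert l {i\<in>insert l U. i<l}" by auto
    have "psum_le a l = sum a (insert l {i\<in>insert l U. i<l})" using pl[OF f s] e by simp
    also have "\<dots> = a l + sum a {i\<in>insert l U. i<l}" using f by (simp add: sum.insert)
    finally show ?thesis using pt[OF f s] by simp
  qed
  have ex_a: "supp a \<noteq> {}" using na unfolding supp_def by auto
  have ex_b: "supp b \<noteq> {}" using nb unfolding supp_def by auto
  have supp_iff: "i \<in> supp c \<longleftrightarrow> c i \<noteq> 0" for c i by (simp add: supp_def)

  have I12: ?C2 if H: ?C1
  proof -
    define \<mu> where "\<mu> = Min (supp q)"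
    define \<nu> where "\<nu> = Max (supp q)"
    have ne: "supp q \<noteq> {}" using H by simp
    have Ha: "\<forall>l. l < \<mu> \<or> l \<ge> \<nu> \<longrightarrow> a l = 0" and Hb: "a \<mu> = q \<mu>" "q \<mu> > 0"
      and Hc: "tsum q = 0" and Hd: "\<forall>l. max (q l) 0 \<le> a l \<and> a l \<le> psum_le q l"
      using H unfolding \<mu>_def \<nu>_def Let_def by auto
    have nn: "\<forall>i. a i \<ge> 0 \<and> b i \<ge> 0"
    proof
      fix i show "a i \<ge> 0 \<and> b i \<ge> 0" using Hd[rule_format, of i] by (auto simp: q_def)
    qed
    have qlo: "q l = 0" if "l < \<mu>" for l
      using that Min_le[OF fq, of l] supp_iff[of l q] unfolding \<mu>_def by force
    have qhi: "q l = 0" if "l > \<nu>" for l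
      using that Max_ge[OF fq, of l] supp_iff[of l q] unfolding \<nu>_def by force
    have qnu: "q \<nu> \<noteq> 0" using Max_in[OF fq ne] supp_iff unfolding \<nu>_def by blast
    have m1: "Min (supp a) = \<mu>"
    proof (rule Min_eqI[OF fa])
      show "\<mu> \<le> y" if "y \<in> supp a" for y using that Ha supp_iff[of y a] by (metis not_le)
      show "\<mu> \<in> supp a" using Hb supp_iff by simp
    qed
    have m2: "Max (supp b) = \<nu>"
    proof (rule Max_eqI[OF fb])
      show "y \<le> \<nu>" if "y \<in> supp b" for y
      proof (rule ccontr)
        assume "\<not> y \<le> \<nu>"
        then have "q y = 0" "a y = 0" using qhi Ha by auto
        then show False using that supp_iff[of y b] by (simp add: q_def)
      qed
      show "\<nu> \<in> supp b" using qnu Ha supp_iff[of \<nu> b] by (simp add: q_def)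
    qed
    have b0: "b l = 0" if "l \<le> \<mu>" for l
    proof (cases "l < \<mu>")
      case True then show ?thesis using qlo[OF True] Ha by (simp add: q_def)
    next
      case False then have "l = \<mu>" using that by simp
      then show ?thesis using Hb by (simp add: q_def)
    qed
    have pd: "psum_le b l \<le> psum_lt a l" for l
      using psq[of l] psa[of l] Hd[rule_format, of l] by linarith
    show ?thesis unfolding Let_def m1 m2 using nn Ha b0 Hc tsq pd by auto
  qed

  have I21: ?C1 if H: ?C2
  proof -
    define \<mu> where "\<mu> = Min (supp a)"
    define \<nu> where "\<nu> = Max (supp b)"
    have nn: "\<forall>i. a i \<ge> 0 \<and> b i \<ge> 0" and Ha: "\<forall>l. l \<ge> \<nu> \<longrightarrow> a l = 0"
      and Hb: "\<forall>l. l \<le> \<mu> \<longrightarrow> b l = 0" and Hc: "tsum a = tsum b"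
      and Hd: "\<forall>l. psum_le b l \<le> psum_lt a l"
      using H unfolding \<mu>_def \<nu>_def Let_def by auto
    have amu: "a \<mu> > 0" using Min_in[OF fa ex_a] nn supp_iff unfolding \<mu>_def
      by (metis order_le_less)
    have bnu: "b \<nu> > 0" using Max_in[OF fb ex_b] nn supp_iff unfolding \<nu>_def
      by (metis order_le_less)
    have alo: "a l = 0" if "l < \<mu>" for l
      using that Min_le[OF fa, of l] supp_iff[of l a] unfolding \<mu>_def by force
    have bhi: "b l = 0" if "l > \<nu>" for l
      using that Max_ge[OF fb, of l] supp_iff[of l b] unfolding \<nu>_def by force
    have qmu: "q \<mu> = a \<mu>" using Hb by (simp add: q_def)
    have ne: "supp q \<noteq> {}" using qmu amu supp_iff[of \<mu> q] by auto
    have m1: "Min (supp q) = \<mu>"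
    proof (rule Min_eqI[OF fq])
      show "\<mu> \<le> y" if "y \<in> supp q" for y
      proof (rule ccontr)
        assume "\<not> \<mu> \<le> y"
        then show False using alo[of y] Hb that supp_iff[of y q] by (simp add: q_def)
      qed
      show "\<mu> \<in> supp q" using qmu amu supp_iff[of \<mu> q] by simp
    qed
    have m2: "Max (supp q) = \<nu>"
    proof (rule Max_eqI[OF fq])
      show "y \<le> \<nu>" if "y \<in> supp q" for y
      proof (rule ccontr)
        assume "\<not> y \<le> \<nu>"
        then show False using bhi[of y] Ha that supp_iff[of y q] by (simp add: q_def)
      qed
      show "\<nu> \<in> supp q" using Ha bnu supp_iff[of \<nu> q] by (simp add: q_def)
    qed
    have pd: "max (q l) 0 \<le> a l \<and> a l \<le> psum_le q l" for l
    proof -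
      have "q l \<le> a l" "0 \<le> a l" using nn by (auto simp: q_def)
      moreover have "a l \<le> psum_le q l" using psq[of l] psa[of l] Hd[rule_format, of l] by linarith
      ultimately show ?thesis by simp
    qed
    show ?thesis unfolding Let_def m1 m2 using ne alo Ha qmu amu Hc tsq pd by auto
  qed

  have I23: "?C2 \<longleftrightarrow> ?C3"
  proof (cases "(\<forall>i. a i \<ge> 0 \<and> b i \<ge> 0) \<and> tsum a = tsum b")
    case False then show ?thesis by (auto simp: Let_def)
  next
    case True
    then have nn: "\<forall>i. a i \<ge> 0 \<and> b i \<ge> 0" and eq: "tsum a = tsum b" by auto
    have nna: "\<forall>i. a i \<ge> 0" and nnb: "\<forall>i. b i \<ge> 0" using nn by auto
    define \<mu> where "\<mu> = Min (supp a)"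
    define \<nu> where "\<nu> = Max (supp b)"
    define M where "M = length (Sseq a)"
    have la: "int M = tsum a" using Sseq_len[OF fa nna] M_def by simp
    have lb: "int (length (Sseq b)) = tsum a" using Sseq_len[OF fb nnb] eq by simp
    then have lb': "length (Sseq b) = M" using la by simp
    have cnt: "int (length (filter (\<lambda>x. x \<le> l) (Sseq c))) = psum_le c l"
      if "finite (supp c)" "\<forall>i. c i \<ge> 0" for c l
      using Sseq_cnt[OF that] by (simp add: psum_le_def)
    have ltle: "psum_lt c l = psum_le c (l - 1)" for c l
    proof -
      have "{i \<in> supp c. i < l} = {i \<in> supp c. i \<le> l - 1}" by auto
      then show ?thesis by (simp add: psum_lt_def psum_le_def)
    qed
    have D: "(\<forall>l. psum_le b l \<le> psum_lt a l) \<longleftrightarrow> (\<forall>i<M. Sseq a ! i < Sseq b ! i)"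
    proof -
      have "(\<forall>i<M. Sseq a ! i < Sseq b ! i) \<longleftrightarrow>
        (\<forall>l. length (filter (\<lambda>x. x\<le>l) (Sseq b)) \<le> length (filter (\<lambda>x. x \<le> l-1) (Sseq a)))"
        by (rule sorted_cmp[OF Sseq_sorted[OF fa] Sseq_sorted[OF fb] M_def[symmetric] lb'])
      also have "\<dots> \<longleftrightarrow> (\<forall>l. psum_le b l \<le> psum_lt a l)"
        by (simp add: ltle flip: cnt[OF fa nna] cnt[OF fb nnb])
      finally show ?thesis by simp
    qed
    have B: "(\<forall>l. l \<ge> \<nu> \<longrightarrow> a l = 0) \<and> (\<forall>l. l \<le> \<mu> \<longrightarrow> b l = 0)"
      if Hd: "\<forall>l. psum_le b l \<le> psum_lt a l"
    proof
      show "\<forall>l. l \<le> \<mu> \<longrightarrow> b l = 0"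
      proof (intro allI impI)
        fix l assume l: "l \<le> \<mu>"
        have "psum_lt a \<mu> = 0" unfolding psum_lt_def
        proof (rule sum.neutral)
          show "\<forall>x\<in>{i \<in> supp a. i < \<mu>}. a x = 0" using Min_le[OF fa] \<mu>_def by force
        qed
        then have p: "psum_le b \<mu> \<le> 0" using Hd by metis
        show "b l = 0"
        proof (rule ccontr)
          assume "b l \<noteq> 0"
          then have "l \<in> {i \<in> supp b. i \<le> \<mu>}" using l supp_iff by auto
          then have "b l \<le> psum_le b \<mu>" unfolding psum_le_def
            by (rule member_le_sum) (use nnb fb in auto)
          then show False using p nnb[rule_format, of l] \<open>b l \<noteq> 0\<close> by linarith
        qed
      qed
      show "\<forall>l. l \<ge> \<nu> \<longrightarrow> a l = 0"
      proof (intro allI impI)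
        fix l assume l: "l \<ge> \<nu>"
        have "{i\<in>supp b. i \<le> \<nu>} = supp b" using Max_ge[OF fb] \<nu>_def by auto
        then have "psum_le b \<nu> = tsum b" unfolding psum_le_def tsum_def by simp
        then have p: "tsum a \<le> psum_lt a \<nu>" using Hd eq by metis
        show "a l = 0"
        proof (rule ccontr)
          assume al: "a l \<noteq> 0"
          have "psum_lt a \<nu> \<le> sum a (supp a - {l})" unfolding psum_lt_def
            by (rule sum_mono2) (use fa l nna in auto)
          also have "\<dots> = tsum a - a l" unfolding tsum_def using fa al supp_iff
            by (simp add: sum_diff1)
          finally show False using p al nna[rule_format, of l] by linarith
        qed
      qed
    qed
    have E: "(\<forall>i<M. Sseq a ! i < Sseq b ! i) \<longleftrightarrow>
      (\<forall>\<alpha> \<beta>. 1 \<le> \<alpha> \<and> \<alpha> \<le> tsum a \<and> 1 \<le> \<beta> \<and> \<beta> \<le> tsum b \<and> \<beta> \<ge> \<alpha> \<longrightarrow>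
         Sseq a ! nat (\<alpha> - 1) < Sseq b ! nat (\<beta> - 1))"
    proof
      assume H: "\<forall>i<M. Sseq a ! i < Sseq b ! i"
      show "\<forall>\<alpha> \<beta>. 1 \<le> \<alpha> \<and> \<alpha> \<le> tsum a \<and> 1 \<le> \<beta> \<and> \<beta> \<le> tsum b \<and> \<beta> \<ge> \<alpha> \<longrightarrow>
         Sseq a ! nat (\<alpha> - 1) < Sseq b ! nat (\<beta> - 1)"
      proof (intro allI impI)
        fix \<alpha> \<beta> :: int
        assume r: "1 \<le> \<alpha> \<and> \<alpha> \<le> tsum a \<and> 1 \<le> \<beta> \<and> \<beta> \<le> tsum b \<and> \<beta> \<ge> \<alpha>"
        have ij: "nat (\<alpha> - 1) \<le> nat (\<beta> - 1)" "nat (\<beta> - 1) < M" using r la eq by auto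
        have "Sseq b ! nat (\<alpha> - 1) \<le> Sseq b ! nat (\<beta> - 1)"
          by (rule sorted_nth_mono[OF Sseq_sorted[OF fb] ij(1)]) (use ij lb' in simp)
        moreover have "Sseq a ! nat (\<alpha> - 1) < Sseq b ! nat (\<alpha> - 1)" using H ij by simp
        ultimately show "Sseq a ! nat (\<alpha> - 1) < Sseq b ! nat (\<beta> - 1)" by simp
      qed
    next
      assume H: "\<forall>\<alpha> \<beta>. 1 \<le> \<alpha> \<and> \<alpha> \<le> tsum a \<and> 1 \<le> \<beta> \<and> \<beta> \<le> tsum b \<and> \<beta> \<ge> \<alpha> \<longrightarrow>
         Sseq a ! nat (\<alpha> - 1) < Sseq b ! nat (\<beta> - 1)"
      show "\<forall>i<M. Sseq a ! i < Sseq b ! i"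
      proof (intro allI impI)
        fix i assume i: "i < M"
        have "Sseq a ! nat (int i + 1 - 1) < Sseq b ! nat (int i + 1 - 1)"
          using H[rule_format, of "int i + 1" "int i + 1"] i la eq by simp
        then show "Sseq a ! i < Sseq b ! i" by simp
      qed
    qed
    show ?thesis unfolding Let_def using True B D E \<mu>_def \<nu>_def by auto
  qed
  show ?thesis using I12 I21 I23 by blast
qed

end
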